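(* Let $(X,\mathcal{O}(X))$ be a measurable space, $\mathcal{A}$ a unital $C^*$-algebra and $\mathcal{H}$ a Hilbert space. Every spectral instrument $\mathcal{I}:\mathcal{O}(X)\to CP(\mathcal{A},\mathcal{B}(\mathcal{H}))$ is a $C^*$-extreme point of $I_{\mathcal{H}}(X,\mathcal{A})$.
   Context: A CP instrument is a map $\mathcal{I}$ from $\mathcal{O}(X)$ to the completely positive maps $\mathcal{A}\to\mathcal{B}(\mathcal{H})$ such that for all $a\in\mathcal{A}$, $h,k\in\mathcal{H}$, $A\mapsto\langle h,\mathcal{I}(A)(a)k\rangle$ is a countably additive complex measure. It is UCP if $\mathcal{I}(X)(1_\mathcal{A})=I_\mathcal{H}$; $I_{\mathcal{H}}(X,\mathcal{A})$ is the set of UCP instruments. It is spectral if it is UCP and $\mathcal{I}(A)$ is a $*$-homomorphism for every $A\in\mathcal{O}(X)$. $\mathcal{I}$ is $C^*$-extreme if whenever $\mathcal{I}(\cdot)=\sum_{i=1}^nT_i^*\mathcal{I}_i(\cdot)T_i$ with $\mathcal{I}_i\in I_{\mathcal{H}}(X,\mathcal{A})$ and invertible $T_i\in\mathcal{B}(\mathcal{H})$, $\sum T_i^*T_i=I_\mathcal{H}$, there are unitaries $U_i$ with $\mathcal{I}_i(\cdot)=U_i^*\mathcal{I}(\cdot)U_i$ for all $i$. *)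

theory Defs
  imports "HOL-Analysis.Analysis"
begin

class complex_vector = ab_group_add +
  fixes scaleC :: "complex \<Rightarrow> 'a \<Rightarrow> 'a"
  assumes scaleC_add_right: "scaleC a (x + y) = scaleC a x + scaleC a y"
    and scaleC_add_left: "scaleC (a + b) x = scaleC a x + scaleC b x"
    and scaleC_scaleC: "scaleC a (scaleC b x) = scaleC (a * b) x"
    and scaleC_one: "scaleC 1 x = x"

text \<open>Complex Hilbert space: complete complex inner product space
  (inner product conjugate-linear in the first, linear in the second argument).\<close>
class chilbert = complex_vector + banach +
  fixes cinner :: "'a \<Rightarrow> 'a \<Rightarrow> complex"
  assumes scaleR_scaleC_h: "scaleR r x = scaleC (complex_of_real r) x"
    and cinner_commute: "cinner x y = cnj (cinner y x)"
    and cinner_add_right: "cinner x (y + z) = cinner x y + cinner x z"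
    and cinner_scaleC_right: "cinner x (scaleC a y) = a * cinner x y"
    and cinner_ge_zero: "0 \<le> Re (cinner x x)"
    and cinner_eq_zero_iff: "cinner x x = 0 \<longleftrightarrow> x = 0"
    and norm_eq_sqrt_cinner: "norm x = sqrt (Re (cinner x x))"

class cstar_algebra = complex_vector + real_normed_algebra_1 + banach +
  fixes cstar :: "'a \<Rightarrow> 'a"
  assumes scaleR_scaleC_a: "scaleR r x = scaleC (complex_of_real r) x"
    and norm_scaleC: "norm (scaleC a x) = cmod a * norm x"
    and scaleC_mult_left: "scaleC a x * y = scaleC a (x * y)"
    and scaleC_mult_right: "x * scaleC a y = scaleC a (x * y)"
    and cstar_cstar: "cstar (cstar x) = x"
    and cstar_add: "cstar (x + y) = cstar x + cstar y"
    and cstar_mult: "cstar (x * y) = cstar y * cstar x"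
    and cstar_scaleC: "cstar (scaleC a x) = scaleC (cnj a) (cstar x)"
    and cstar_identity: "norm (cstar x * x) = (norm x)\<^sup>2"

definition clinear :: "('a::complex_vector \<Rightarrow> 'b::complex_vector) \<Rightarrow> bool" where
  "clinear f \<longleftrightarrow> (\<forall>a x y. f (x + y) = f x + f y \<and> f (scaleC a x) = scaleC a (f x))"

definition bounded_op :: "('h::chilbert \<Rightarrow> 'h) \<Rightarrow> bool" where
  "bounded_op T \<longleftrightarrow> clinear T \<and> (\<exists>K. \<forall>x. norm (T x) \<le> K * norm x)"

definition adjoint :: "('h::chilbert \<Rightarrow> 'h) \<Rightarrow> ('h \<Rightarrow> 'h)" where
  "adjoint T = (THE S. \<forall>x y. cinner (S x) y = cinner x (T y))"

definition invertible_op :: "('h::chilbert \<Rightarrow> 'h) \<Rightarrow> bool" where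
  "invertible_op T \<longleftrightarrow> bounded_op T \<and> (\<exists>S. bounded_op S \<and> S \<circ> T = id \<and> T \<circ> S = id)"

definition unitary_op :: "('h::chilbert \<Rightarrow> 'h) \<Rightarrow> bool" where
  "unitary_op U \<longleftrightarrow> bounded_op U \<and> adjoint U \<circ> U = id \<and> U \<circ> adjoint U = id"

text \<open>Completely positive maps A -> B(H): linear, B(H)-valued, and for every n the
  amplification phi_n : M_n(A) -> M_n(B(H)) = B(H^n) maps positive matrices B* B
  (B in M_n(A)) to positive operators on H^n.\<close>
definition cp_map :: "('a::cstar_algebra \<Rightarrow> 'h::chilbert \<Rightarrow> 'h) \<Rightarrow> bool" where
  "cp_map \<phi> \<longleftrightarrow>
     (\<forall>c x y. \<phi> (x + y) = (\<lambda>h. \<phi> x h + \<phi> y h) \<and> \<phi> (scaleC c x) = (\<lambda>h. scaleC c (\<phi> x h))) \<and> (\<forall>a. bounded_op (\<phi> a)) \<and>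
     (\<forall>(n::nat) (B::nat \<Rightarrow> nat \<Rightarrow> 'a) (h::nat \<Rightarrow> 'h).
        let s = (\<Sum>i<n. \<Sum>j<n. cinner (h i) (\<phi> (\<Sum>k<n. cstar (B k i) * B k j) (h j)))
        in s \<in> \<real> \<and> 0 \<le> Re s)"

definition complex_countably_additive :: "'x measure \<Rightarrow> ('x set \<Rightarrow> complex) \<Rightarrow> bool" where
  "complex_countably_additive M \<mu> \<longleftrightarrow>
     (\<forall>F::nat \<Rightarrow> 'x set. range F \<subseteq> sets M \<longrightarrow> disjoint_family F \<longrightarrow>
        (\<lambda>n. \<mu> (F n)) sums \<mu> (\<Union>n. F n))"

definition cp_instrument :: "'x measure \<Rightarrow> ('x set \<Rightarrow> 'a::cstar_algebra \<Rightarrow> 'h::chilbert \<Rightarrow> 'h) \<Rightarrow> bool" where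
  "cp_instrument M I \<longleftrightarrow> (\<forall>A\<in>sets M. cp_map (I A)) \<and>
     (\<forall>a h k. complex_countably_additive M (\<lambda>A. cinner h (I A a k)))"

definition ucp_instrument :: "'x measure \<Rightarrow> ('x set \<Rightarrow> 'a::cstar_algebra \<Rightarrow> 'h::chilbert \<Rightarrow> 'h) \<Rightarrow> bool" where
  "ucp_instrument M I \<longleftrightarrow> cp_instrument M I \<and> I (space M) 1 = id"

definition spectral_instrument :: "'x measure \<Rightarrow> ('x set \<Rightarrow> 'a::cstar_algebra \<Rightarrow> 'h::chilbert \<Rightarrow> 'h) \<Rightarrow> bool" where
  "spectral_instrument M I \<longleftrightarrow> ucp_instrument M I \<and>
     (\<forall>A\<in>sets M. \<forall>a b. I A (a * b) = I A a \<circ> I A b \<and> I A (cstar a) = adjoint (I A a))"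

definition cstar_extreme :: "'x measure \<Rightarrow> ('x set \<Rightarrow> 'a::cstar_algebra \<Rightarrow> 'h::chilbert \<Rightarrow> 'h) \<Rightarrow> bool" where
  "cstar_extreme M I \<longleftrightarrow>
     (\<forall>(n::nat) (Is::nat \<Rightarrow> 'x set \<Rightarrow> 'a \<Rightarrow> 'h \<Rightarrow> 'h) (T::nat \<Rightarrow> 'h \<Rightarrow> 'h).
        (\<forall>i<n. ucp_instrument M (Is i) \<and> invertible_op (T i)) \<and>
        (\<lambda>h. \<Sum>i<n. adjoint (T i) (T i h)) = id \<and>
        (\<forall>A\<in>sets M. \<forall>a. I A a = (\<lambda>h. \<Sum>i<n. adjoint (T i) (Is i A a (T i h))))
        \<longrightarrow> (\<exists>U::nat \<Rightarrow> 'h \<Rightarrow> 'h. \<forall>i<n. unitary_op (U i) \<and>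
               (\<forall>A\<in>sets M. \<forall>a. Is i A a = (\<lambda>h. adjoint (U i) (I A a (U i h))))))"

end

theory Submission
  imports Defs
begin

lemma scaleC_zero_left[simp]: "scaleC 0 (x::'a::complex_vector) = 0"
proof -
  have "scaleC (0+0) x = scaleC 0 x + scaleC 0 x" by (rule scaleC_add_left)
  then show ?thesis by simp
qed

lemma scaleC_zero_right[simp]: "scaleC a (0::'a::complex_vector) = 0"
proof -
  have "scaleC a (0+0) = scaleC a (0::'a) + scaleC a 0" by (rule scaleC_add_right)
  then show ?thesis by simp
qed

lemma scaleC_minus_right: "scaleC a (- (x::'a::complex_vector)) = - scaleC a x"
proof -
  have "scaleC a x + scaleC a (-x) = 0" using scaleC_add_right[of a x "-x"] by simp
  then show ?thesis by (metis add.commute add_eq_0_iff)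
qed

lemma scaleC_minus_left: "scaleC (- a) (x::'a::complex_vector) = - scaleC a x"
proof -
  have "scaleC a x + scaleC (-a) x = 0" using scaleC_add_left[of a "-a" x] by simp
  then show ?thesis by (metis add.commute add_eq_0_iff)
qed

lemma scaleC_diff_right: "scaleC a ((x::'a::complex_vector) - y) = scaleC a x - scaleC a y"
  by (simp only: diff_conv_add_uminus scaleC_add_right scaleC_minus_right)

lemma scaleC_diff_left: "scaleC (a - b) (x::'a::complex_vector) = scaleC a x - scaleC b x"
  by (simp only: diff_conv_add_uminus scaleC_add_left scaleC_minus_left)

lemma scaleC_sum_right: "scaleC a (\<Sum>i\<in>S. f i) = (\<Sum>i\<in>S. scaleC a (f i::'a::complex_vector))"
  by (induction S rule: infinite_finite_induct) (auto simp: scaleC_add_right)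

lemma clinear_add: "clinear f \<Longrightarrow> f (x + y) = f x + f y"
  by (simp add: clinear_def)

lemma clinear_scaleC: "clinear f \<Longrightarrow> f (scaleC a x) = scaleC a (f x)"
  by (simp add: clinear_def)

lemma clinear_zero: "clinear f \<Longrightarrow> f 0 = 0"
  using clinear_scaleC[of f 0 0] by simp

lemma clinear_minus: "clinear f \<Longrightarrow> f (- x) = - f x"
  by (metis add.commute add_eq_0_iff clinear_add clinear_zero add.right_inverse)

lemma clinear_diff: "clinear f \<Longrightarrow> f (x - y) = f x - f y"
  by (simp only: diff_conv_add_uminus clinear_add clinear_minus)

lemma clinear_sum: "clinear f \<Longrightarrow> f (\<Sum>i\<in>S. g i) = (\<Sum>i\<in>S. f (g i))"
  by (induction S rule: infinite_finite_induct) (auto simp: clinear_add clinear_zero)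

section \<open>Inner product basics\<close>


lemma cinner_add_left: "cinner ((x::'h::chilbert) + y) z = cinner x z + cinner y z"
  by (metis cinner_add_right cinner_commute complex_cnj_add)

lemma cinner_scaleC_left: "cinner (scaleC a (x::'h::chilbert)) y = cnj a * cinner x y"
  by (metis cinner_commute cinner_scaleC_right complex_cnj_cnj complex_cnj_mult)

lemma cinner_zero_right[simp]: "cinner (x::'h::chilbert) 0 = 0"
  using cinner_scaleC_right[of x 0 0] by simp

lemma cinner_zero_left[simp]: "cinner 0 (x::'h::chilbert) = 0"
  using cinner_scaleC_left[of 0 0 x] by simp

lemma cinner_minus_right: "cinner (x::'h::chilbert) (- y) = - cinner x y"
  by (metis add.commute add_eq_0_iff cinner_add_right cinner_zero_right add.right_inverse)

lemma cinner_minus_left: "cinner (- (x::'h::chilbert)) y = - cinner x y"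
  by (metis add.commute add_eq_0_iff cinner_add_left cinner_zero_left add.right_inverse)

lemma cinner_diff_right: "cinner (x::'h::chilbert) (y - z) = cinner x y - cinner x z"
  by (simp only: diff_conv_add_uminus cinner_add_right cinner_minus_right)

lemma cinner_diff_left: "cinner ((x::'h::chilbert) - y) z = cinner x z - cinner y z"
  by (simp only: diff_conv_add_uminus cinner_add_left cinner_minus_left)

lemma cinner_sum_right: "cinner (x::'h::chilbert) (\<Sum>i\<in>S. f i) = (\<Sum>i\<in>S. cinner x (f i))"
  by (induction S rule: infinite_finite_induct) (auto simp: cinner_add_right)

lemma cinner_sum_left: "cinner (\<Sum>i\<in>S. f i) (x::'h::chilbert) = (\<Sum>i\<in>S. cinner (f i) x)"
  by (induction S rule: infinite_finite_induct) (auto simp: cinner_add_left)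

lemma cinner_scaleR_right: "cinner (x::'h::chilbert) (scaleR r y) = of_real r * cinner x y"
  by (simp add: scaleR_scaleC_h cinner_scaleC_right)

lemma cinner_scaleR_left: "cinner (scaleR r (x::'h::chilbert)) y = of_real r * cinner x y"
  by (simp add: scaleR_scaleC_h cinner_scaleC_left)

lemma cinner_self: "cinner (x::'h::chilbert) x = complex_of_real ((norm x)\<^sup>2)"
proof -
  have "Im (cinner x x) = - Im (cinner x x)"
    using arg_cong[OF cinner_commute[of x x], of Im] by simp
  then have i: "Im (cinner x x) = 0" by simp
  have r: "Re (cinner x x) = (norm x)\<^sup>2"
    using norm_eq_sqrt_cinner[of x] cinner_ge_zero[of x] by simp
  show ?thesis using i r by (simp add: complex_eq_iff)
qed

lemma cinner_self_Re: "Re (cinner (x::'h::chilbert) x) = (norm x)\<^sup>2"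
  by (simp add: cinner_self)

lemma cinner_cnj: "cnj (cinner (x::'h::chilbert) y) = cinner y x"
  by (metis cinner_commute)

lemma cinner_Re_sym: "Re (cinner (x::'h::chilbert) y) = Re (cinner y x)"
  by (metis cinner_commute complex_cnj_cancel_iff cnj.sel(1))

lemma norm_diff_sq: "(norm ((x::'h::chilbert) - y))\<^sup>2 = (norm x)\<^sup>2 - 2 * Re (cinner x y) + (norm y)\<^sup>2"
proof -
  have "cinner (x - y) (x - y) = cinner x x - cinner x y - cinner y x + cinner y y"
    by (simp add: cinner_diff_left cinner_diff_right)
  then have "Re (cinner (x - y) (x - y)) = Re (cinner x x) - Re (cinner x y) - Re (cinner y x) + Re (cinner y y)"
    by simp
  then show ?thesis by (simp add: cinner_self_Re cinner_Re_sym[of y x])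
qed

lemma norm_add_sq: "(norm ((x::'h::chilbert) + y))\<^sup>2 = (norm x)\<^sup>2 + 2 * Re (cinner x y) + (norm y)\<^sup>2"
  using norm_diff_sq[of x "-y"] by (simp add: cinner_minus_right)

lemma cinner_eq_ext: "(\<And>u. cinner u (x::'h::chilbert) = cinner u y) \<Longrightarrow> x = y"
proof -
  assume "\<And>u. cinner u x = cinner u y"
  then have "cinner (x - y) (x - y) = 0" by (simp add: cinner_diff_right)
  then show "x = y" by (simp add: cinner_eq_zero_iff)
qed

lemma cinner_eq_ext_left: "(\<And>u. cinner (x::'h::chilbert) u = cinner y u) \<Longrightarrow> x = y"
  by (rule cinner_eq_ext) (metis cinner_commute)

lemma norm_scaleC_h: "norm (scaleC a (x::'h::chilbert)) = cmod a * norm x"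
proof -
  have "cinner (scaleC a x) (scaleC a x) = (a * cnj a) * cinner x x"
    by (simp add: cinner_scaleC_left cinner_scaleC_right)
  also have "\<dots> = complex_of_real ((cmod a)\<^sup>2 * (norm x)\<^sup>2)"
    by (simp add: complex_norm_square[symmetric] cinner_self)
  finally have "complex_of_real ((norm (scaleC a x))\<^sup>2) = complex_of_real ((cmod a * norm x)\<^sup>2)"
    by (simp only: cinner_self power_mult_distrib)
  then have "(norm (scaleC a x))\<^sup>2 = (cmod a * norm x)\<^sup>2"
    using of_real_eq_iff by blast
  then show ?thesis
    by (rule power2_eq_imp_eq) auto
qed

lemma cauchy_schwarz: "cmod (cinner (x::'h::chilbert) y) \<le> norm x * norm y"
proof (cases "y = 0")
  case True then show ?thesis by simp
next
  case False
  define N where "N = (norm y)\<^sup>2"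
  have Npos: "N > 0" using False by (simp add: N_def)
  define c where "c = cinner y x"
  define t where "t = c / complex_of_real N"
  define z where "z = x - scaleC t y"
  have xy: "cinner x y = cnj c" by (simp add: c_def cinner_cnj)
  have yy: "cinner y y = complex_of_real N" by (simp add: cinner_self N_def)
  have e: "cinner z z = cinner x x - t * cinner x y - cnj t * cinner y x + cnj t * t * cinner y y"
    by (simp add: z_def cinner_diff_left cinner_diff_right cinner_scaleC_left cinner_scaleC_right algebra_simps)
  also have "\<dots> = cinner x x - c * cnj c / complex_of_real N"
    using Npos by (simp add: xy yy t_def c_def[symmetric] field_simps)
  also have "\<dots> = complex_of_real ((norm x)\<^sup>2 - (cmod c)\<^sup>2 / N)"
    using complex_norm_square[of c] by (simp add: cinner_self)
  finally have "0 \<le> (norm x)\<^sup>2 - (cmod c)\<^sup>2 / N"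
    using cinner_ge_zero[of z] by simp
  then have "(cmod c)\<^sup>2 \<le> (norm x)\<^sup>2 * N" using Npos by (simp add: field_simps)
  then have "(cmod c)\<^sup>2 \<le> (norm x * norm y)\<^sup>2" by (simp add: N_def power_mult_distrib)
  then have "cmod c \<le> norm x * norm y"
    by (rule power2_le_imp_le) simp
  moreover have "cmod (cinner x y) = cmod c" by (simp add: xy)
  ultimately show ?thesis by simp
qed

lemma bounded_op_bound: "bounded_op T \<Longrightarrow> \<exists>K\<ge>0. \<forall>x. norm (T x) \<le> K * norm x"
  unfolding bounded_op_def
  by (metis (no_types, opaque_lifting) max.cobounded1 max.cobounded2 mult_right_mono norm_ge_zero order.trans)

lemma bounded_op_clinear: "bounded_op T \<Longrightarrow> clinear T"
  by (simp add: bounded_op_def)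

lemma clinear_scaleR: "clinear (T::'h::chilbert \<Rightarrow> 'g::chilbert) \<Longrightarrow> T (scaleR r x) = scaleR r (T x)"
  by (simp add: scaleR_scaleC_h clinear_scaleC)

lemma bounded_op_bl: "bounded_op (T::'h::chilbert \<Rightarrow> 'h) \<Longrightarrow> bounded_linear T"
proof -
  assume b: "bounded_op T"
  then obtain K where K: "\<forall>x. norm (T x) \<le> K * norm x" using bounded_op_bound by blast
  show ?thesis
  proof (rule bounded_linear_intro[where K=K])
    show "T (x + y) = T x + T y" for x y using b by (simp add: bounded_op_def clinear_add)
    show "T (scaleR r x) = scaleR r (T x)" for r x using b by (simp add: bounded_op_def clinear_scaleR)
    show "norm (T x) \<le> norm x * K" for x using K by (simp add: mult.commute)
  qed
qed

lemma bl_cinner_left: "bounded_linear (\<lambda>x::'h::chilbert. cinner x y)"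
proof (rule bounded_linear_intro[where K="norm y"])
  show "cinner (x + z) y = cinner x y + cinner z y" for x z by (rule cinner_add_left)
  show "cinner (scaleR r x) y = scaleR r (cinner x y)" for r x by (simp add: cinner_scaleR_left scaleR_conv_of_real)
  show "norm (cinner x y) \<le> norm x * norm y" for x :: 'h by (rule cauchy_schwarz)
qed

lemma bl_cinner_right: "bounded_linear (\<lambda>y::'h::chilbert. cinner x y)"
proof (rule bounded_linear_intro[where K="norm x"])
  show "cinner x (y + z) = cinner x y + cinner x z" for y z by (rule cinner_add_right)
  show "cinner x (scaleR r y) = scaleR r (cinner x y)" for r y by (simp add: cinner_scaleR_right scaleR_conv_of_real)
  show "norm (cinner x y) \<le> norm y * norm x" for y :: 'h using cauchy_schwarz[of x y] by (simp add: mult.commute)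
qed

lemma bl_scaleC: "bounded_linear (\<lambda>x::'h::chilbert. scaleC a x)"
proof (rule bounded_linear_intro[where K="cmod a"])
  show "scaleC a (x + z) = scaleC a x + scaleC a z" for x z :: 'h by (rule scaleC_add_right)
  show "scaleC a (scaleR r x) = scaleR r (scaleC a x)" for r and x :: 'h by (simp add: scaleR_scaleC_h scaleC_scaleC mult.commute)
  show "norm (scaleC a x) \<le> norm x * cmod a" for x :: 'h by (simp add: norm_scaleC_h mult.commute)
qed

lemma riesz:
  fixes f :: "'h::chilbert \<Rightarrow> complex"
  assumes add: "\<And>x y. f (x + y) = f x + f y"
    and sc: "\<And>a x. f (scaleC a x) = a * f x"
    and bd: "\<And>x. cmod (f x) \<le> K * norm x"
  shows "\<exists>y. \<forall>x. f x = cinner y x"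
proof (cases "\<forall>x. f x = 0")
  case True
  then show ?thesis by (intro exI[of _ 0]) simp
next
  case False
  then obtain x0 where x0: "f x0 \<noteq> 0" by blast
  have bl: "bounded_linear f"
  proof (rule bounded_linear_intro[where K=K])
    show "f (x + y) = f x + f y" for x y by (rule add)
    show "f (scaleR r x) = scaleR r (f x)" for r x
      by (simp add: scaleR_scaleC_h sc scaleR_conv_of_real)
    show "norm (f x) \<le> norm x * K" for x using bd[of x] by (simp add: mult.commute)
  qed
  have fsR: "f (scaleR r x) = complex_of_real r * f x" for r x
    by (simp add: scaleR_scaleC_h sc)
  have f0: "f 0 = 0" using sc[of 0 0] by simp
  define C where "C = {x. f x = 1}"
  have e: "scaleC (1 / f x0) x0 \<in> C" using x0 by (simp add: C_def sc)
  define d where "d = Inf ((\<lambda>x. (norm x)\<^sup>2) ` C)"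
  have bdd: "bdd_below ((\<lambda>x. (norm x)\<^sup>2) ` C)"
    by (rule bdd_belowI[where m=0]) auto
  have dle: "d \<le> (norm x)\<^sup>2" if "x \<in> C" for x
    unfolding d_def using bdd that by (auto intro: cInf_lower)
  have "\<exists>x\<in>C. (norm x)\<^sup>2 < d + 1 / real (Suc n)" for n
  proof -
    have "d < d + 1 / real (Suc n)" by simp
    then have "\<exists>v\<in>(\<lambda>x. (norm x)\<^sup>2) ` C. v < d + 1 / real (Suc n)"
      unfolding d_def using e by (intro cInf_lessD) auto
    then show ?thesis by auto
  qed
  then obtain xs where xsC: "\<And>n. xs n \<in> C" and xsd: "\<And>n. (norm (xs n))\<^sup>2 < d + 1 / real (Suc n)"
    by metis
  have mid: "scaleR (1/2) (x + y) \<in> C" if "x \<in> C" "y \<in> C" for x y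
    using that by (simp add: C_def fsR add)
  have par: "(norm (x - y))\<^sup>2 \<le> 2 * (norm x)\<^sup>2 + 2 * (norm y)\<^sup>2 - 4 * d" if "x \<in> C" "y \<in> C" for x y
  proof -
    have "d \<le> (norm (scaleR (1/2) (x + y)))\<^sup>2" using dle mid that by blast
    also have "\<dots> = (norm (x + y))\<^sup>2 / 4" by (simp add: power2_eq_square)
    finally have "4 * d \<le> (norm (x + y))\<^sup>2" by simp
    moreover have "(norm (x - y))\<^sup>2 + (norm (x + y))\<^sup>2 = 2 * (norm x)\<^sup>2 + 2 * (norm y)\<^sup>2"
      by (simp add: norm_diff_sq norm_add_sq)
    ultimately show ?thesis by linarith
  qed
  have cauchy: "Cauchy xs"
  proof (rule CauchyI)
    fix eps :: real assume eps: "0 < eps"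
    obtain M :: nat where M: "4 / eps\<^sup>2 < real M" using reals_Archimedean2 by blast
    have "\<forall>m\<ge>M. \<forall>n\<ge>M. norm (xs m - xs n) < eps"
    proof (intro allI impI)
      fix m n assume mn: "M \<le> m" "M \<le> n"
      have Mpos: "0 < real M" using M eps by (smt (verit) divide_pos_pos zero_less_power)
      have "1 / real (Suc m) \<le> 1 / real M" using mn Mpos by (simp add: frac_le)
      moreover have "1 / real (Suc n) \<le> 1 / real M" using mn Mpos by (simp add: frac_le)
      moreover have "(norm (xs m - xs n))\<^sup>2 \<le> 2 * (norm (xs m))\<^sup>2 + 2 * (norm (xs n))\<^sup>2 - 4 * d"
        using par xsC by blast
      ultimately have "(norm (xs m - xs n))\<^sup>2 \<le> 4 * (1 / real M)"
        using xsd[of m] xsd[of n] by linarith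
      also have "\<dots> < eps\<^sup>2" using M Mpos eps by (simp add: field_simps)
      finally show "norm (xs m - xs n) < eps"
        using eps by (simp add: power_less_imp_less_base)
    qed
    then show "\<exists>M. \<forall>m\<ge>M. \<forall>n\<ge>M. norm (xs m - xs n) < eps" by blast
  qed
  then obtain z where z: "xs \<longlonglongrightarrow> z" using Cauchy_convergent_iff convergent_def by blast
  have "(\<lambda>n. f (xs n)) \<longlonglongrightarrow> f z" by (rule bounded_linear.tendsto[OF bl z])
  moreover have "(\<lambda>n. f (xs n)) = (\<lambda>n. 1)" using xsC by (simp add: C_def)
  ultimately have "(\<lambda>n. 1::complex) \<longlonglongrightarrow> f z" by simp
  then have fz: "f z = 1" by (simp add: LIMSEQ_const_iff)
  have "(\<lambda>n. (norm (xs n))\<^sup>2) \<longlonglongrightarrow> (norm z)\<^sup>2" by (intro tendsto_intros z)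
  moreover have "(\<lambda>n. (norm (xs n))\<^sup>2) \<longlonglongrightarrow> d"
  proof (rule tendsto_sandwich[where f="\<lambda>n. d" and h="\<lambda>n. d + 1 / real (Suc n)"])
    show "\<forall>\<^sub>F n in sequentially. d \<le> (norm (xs n))\<^sup>2" using dle xsC by simp
    show "\<forall>\<^sub>F n in sequentially. (norm (xs n))\<^sup>2 \<le> d + 1 / real (Suc n)"
      using xsd by (simp add: less_imp_le)
    show "(\<lambda>n. d) \<longlonglongrightarrow> d" by simp
    have "(\<lambda>n. 1 / real (Suc n)) \<longlonglongrightarrow> 0"
      using LIMSEQ_inverse_real_of_nat by (simp add: inverse_eq_divide)
    then show "(\<lambda>n. d + 1 / real (Suc n)) \<longlonglongrightarrow> d"
      using tendsto_add[of "\<lambda>n. d" d sequentially] by fastforce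
  qed
  ultimately have nz: "(norm z)\<^sup>2 = d" using LIMSEQ_unique by blast
  have zC: "z \<in> C" using fz by (simp add: C_def)
  have orth: "cinner z u = 0" if u: "f u = 0" for u
  proof -
    define b where "b = cinner z u"
    define s where "s = 1 / ((norm u)\<^sup>2 + 1)"
    have spos: "s > 0" by (simp add: s_def add_nonneg_pos)
    have dpos: "0 < (norm u)\<^sup>2 + 1" by (simp add: add_nonneg_pos)
    have sless: "s * (norm u)\<^sup>2 < 2"
      unfolding s_def using dpos by (simp add: divide_less_eq)
    define t where "t = - complex_of_real s * cnj b"
    have "z + scaleC t u \<in> C" using fz u by (simp add: C_def add sc)
    then have "(norm z)\<^sup>2 \<le> (norm (z + scaleC t u))\<^sup>2" using nz dle by simp
    also have "\<dots> = (norm z)\<^sup>2 + 2 * Re (t * b) + (cmod t)\<^sup>2 * (norm u)\<^sup>2"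
      by (simp add: norm_add_sq cinner_scaleC_right b_def norm_scaleC_h power_mult_distrib)
    finally have "0 \<le> 2 * Re (t * b) + (cmod t)\<^sup>2 * (norm u)\<^sup>2" by simp
    moreover have "Re (t * b) = - s * (cmod b)\<^sup>2"
    proof -
      have "t * b = - complex_of_real s * (b * cnj b)" by (simp add: t_def)
      also have "\<dots> = complex_of_real (- s * (cmod b)\<^sup>2)"
        by (simp add: complex_norm_square[symmetric])
      finally show ?thesis by simp
    qed
    moreover have "(cmod t)\<^sup>2 = s\<^sup>2 * (cmod b)\<^sup>2"
      using spos by (simp add: t_def norm_mult power_mult_distrib)
    ultimately have "0 \<le> s * (cmod b)\<^sup>2 * (s * (norm u)\<^sup>2 - 2)"
      by (simp add: algebra_simps power2_eq_square)
    moreover have "s * (norm u)\<^sup>2 - 2 < 0" using sless by simp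
    ultimately have "\<not> (s * (cmod b)\<^sup>2 > 0)"
      using mult_pos_neg[of "s * (cmod b)\<^sup>2" "s * (norm u)\<^sup>2 - 2"] by linarith
    then have "s * (cmod b)\<^sup>2 \<le> 0" by simp
    then have "(cmod b)\<^sup>2 \<le> 0" using spos by (simp add: mult_le_0_iff)
    then show ?thesis by (simp add: b_def)
  qed
  have zne: "z \<noteq> 0" using fz f0 by auto
  define N where "N = (norm z)\<^sup>2"
  have Npos: "N > 0" using zne by (simp add: N_def)
  show ?thesis
  proof (intro exI allI)
    fix x
    have "f (x - scaleC (f x) z) = 0"
      using add[of "x - scaleC (f x) z" "scaleC (f x) z"] sc[of "f x" z] fz by simp
    then have "cinner z (x - scaleC (f x) z) = 0" by (rule orth)
    then have "cinner z x = f x * complex_of_real N"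
      by (simp add: cinner_diff_right cinner_scaleC_right cinner_self N_def)
    then show "f x = cinner (scaleC (1 / complex_of_real N) z) x"
      using Npos by (simp add: cinner_scaleC_left)
  qed
qed

section \<open>Adjoints\<close>

lemma adjoint_unique:
  assumes "\<And>x y. cinner (S x) y = cinner x (T y)"
  shows "adjoint T = (S :: 'h::chilbert \<Rightarrow> 'h)"
  unfolding adjoint_def
proof (rule the_equality)
  show "\<forall>x y. cinner (S x) y = cinner x (T y)" using assms by blast
  fix S' assume S': "\<forall>x y. cinner (S' x) y = cinner x (T y)"
  show "S' = S"
  proof
    fix x show "S' x = S x"
      by (rule cinner_eq_ext_left) (simp add: S' assms)
  qed
qed

lemma adjoint_exists:
  assumes b: "bounded_op (T::'h::chilbert \<Rightarrow> 'h)"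
  shows "\<exists>S. \<forall>x y. cinner (S x) y = cinner x (T y)"
proof -
  obtain K where K: "K \<ge> 0" "\<And>x. norm (T x) \<le> K * norm x" using bounded_op_bound[OF b] by blast
  have cl: "clinear T" using b by (simp add: bounded_op_def)
  have "\<exists>z. \<forall>y. cinner x (T y) = cinner z y" for x
  proof (rule riesz[where K="norm x * K"])
    show "cinner x (T (y + w)) = cinner x (T y) + cinner x (T w)" for y w
      by (simp add: clinear_add[OF cl] cinner_add_right)
    show "cinner x (T (scaleC a y)) = a * cinner x (T y)" for a y
      by (simp add: clinear_scaleC[OF cl] cinner_scaleC_right)
    show "cmod (cinner x (T y)) \<le> norm x * K * norm y" for y
    proof -
      have "cmod (cinner x (T y)) \<le> norm x * norm (T y)" by (rule cauchy_schwarz)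
      also have "\<dots> \<le> norm x * (K * norm y)" using K by (simp add: mult_left_mono)
      finally show ?thesis by (simp add: mult.assoc)
    qed
  qed
  then show ?thesis by metis
qed

lemma adjoint_prop:
  assumes "bounded_op (T::'h::chilbert \<Rightarrow> 'h)"
  shows "cinner (adjoint T x) y = cinner x (T y)"
proof -
  obtain S where S: "\<And>x y. cinner (S x) y = cinner x (T y)" using adjoint_exists[OF assms] by blast
  have "adjoint T = S" by (rule adjoint_unique) (rule S)
  then show ?thesis using S by simp
qed

lemma adjoint_prop2:
  assumes "bounded_op (T::'h::chilbert \<Rightarrow> 'h)"
  shows "cinner x (adjoint T y) = cinner (T x) y"
  by (metis adjoint_prop assms cinner_commute)

lemma adjoint_clinear:
  assumes "bounded_op (T::'h::chilbert \<Rightarrow> 'h)"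
  shows "clinear (adjoint T)"
  unfolding clinear_def
proof (intro allI conjI)
  fix a x y
  show "adjoint T (x + y) = adjoint T x + adjoint T y"
    by (rule cinner_eq_ext_left) (simp add: adjoint_prop[OF assms] cinner_add_left)
  show "adjoint T (scaleC a x) = scaleC a (adjoint T x)"
    by (rule cinner_eq_ext_left) (simp add: adjoint_prop[OF assms] cinner_scaleC_left)
qed

lemma adjoint_bounded:
  assumes b: "bounded_op (T::'h::chilbert \<Rightarrow> 'h)"
  shows "bounded_op (adjoint T)"
proof -
  obtain K where K: "K \<ge> 0" "\<And>x. norm (T x) \<le> K * norm x" using bounded_op_bound[OF b] by blast
  have "norm (adjoint T y) \<le> K * norm y" for y
  proof (cases "adjoint T y = 0")
    case True then show ?thesis using K by simp
  next
    case False
    have "(norm (adjoint T y))\<^sup>2 = Re (cinner y (T (adjoint T y)))"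
      by (simp add: cinner_self_Re[symmetric] adjoint_prop[OF b])
    also have "\<dots> \<le> cmod (cinner y (T (adjoint T y)))" by (rule complex_Re_le_cmod)
    also have "\<dots> \<le> norm y * norm (T (adjoint T y))" by (rule cauchy_schwarz)
    also have "\<dots> \<le> norm y * (K * norm (adjoint T y))" using K by (simp add: mult_left_mono)
    finally have "norm (adjoint T y) * norm (adjoint T y) \<le> (K * norm y) * norm (adjoint T y)"
      by (simp add: power2_eq_square algebra_simps)
    then show ?thesis using False by simp
  qed
  then show ?thesis using adjoint_clinear[OF b] by (auto simp: bounded_op_def)
qed

fun sqit :: "('h::chilbert \<Rightarrow> 'h) \<Rightarrow> nat \<Rightarrow> 'h \<Rightarrow> 'h" where
  "sqit Q 0 = (\<lambda>h. 0)"
| "sqit Q (Suc n) = (\<lambda>h. scaleR (1/2) (Q h + sqit Q n (sqit Q n h)))"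

lemma clinear_iff_parts:
  "clinear f \<longleftrightarrow> (\<forall>x y. f (x + y) = f x + f y) \<and> (\<forall>a x. f (scaleC a x) = scaleC a (f x))"
  by (auto simp: clinear_def)

lemma op_sqrt:
  fixes Q :: "'h::chilbert \<Rightarrow> 'h"
  assumes bQ: "bounded_op Q"
    and sa: "\<And>x y. cinner (Q x) y = cinner x (Q y)"
    and r0: "0 \<le> r" and r1: "r < 1"
    and nQ: "\<And>h. norm (Q h) \<le> r * norm h"
  shows "\<exists>R. bounded_op R \<and> (\<forall>x y. cinner (R x) y = cinner x (R y)) \<and> (\<forall>h. R (R h) = h - Q h)
           \<and> (\<forall>C. bounded_op C \<longrightarrow> (\<forall>h. C (Q h) = Q (C h)) \<longrightarrow> (\<forall>h. C (R h) = R (C h)))"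
proof -
  define \<rho> where "\<rho> = 1 - sqrt (1 - r)"
  have \<rho>0: "0 \<le> \<rho>" using r0 r1 by (simp add: \<rho>_def)
  have \<rho>1: "\<rho> < 1" using r1 by (simp add: \<rho>_def)
  have \<rho>eq: "r + \<rho>\<^sup>2 = 2 * \<rho>"
  proof -
    have "(sqrt (1 - r))\<^sup>2 = 1 - r" using r1 by simp
    then show ?thesis by (simp add: \<rho>_def power2_eq_square algebra_simps)
  qed
  have clQ: "clinear Q" using bQ by (simp add: bounded_op_def)
  let ?X = "sqit Q"
  have lin: "clinear (?X n)" for n
  proof (induction n)
    case 0 then show ?case by (simp add: clinear_def)
  next
    case (Suc n)
    show ?case unfolding clinear_def
    proof (intro allI conjI)
      fix a x y
      show "?X (Suc n) (x + y) = ?X (Suc n) x + ?X (Suc n) y"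
        using Suc by (simp add: clinear_add[OF clQ] clinear_add scaleR_add_right algebra_simps)
      show "?X (Suc n) (scaleC a x) = scaleC a (?X (Suc n) x)"
        using Suc by (simp add: clinear_scaleC[OF clQ] clinear_scaleC scaleR_scaleC_h scaleC_scaleC scaleC_add_right mult.commute)
    qed
  qed
  have nb: "norm (?X n h) \<le> \<rho> * norm h" for n h
  proof (induction n arbitrary: h)
    case 0 then show ?case using \<rho>0 by simp
  next
    case (Suc n)
    have "norm (?X (Suc n) h) = (1/2) * norm (Q h + ?X n (?X n h))" by simp
    also have "\<dots> \<le> (1/2) * (norm (Q h) + norm (?X n (?X n h)))"
      by (simp add: norm_triangle_ineq)
    also have "\<dots> \<le> (1/2) * (r * norm h + \<rho> * (\<rho> * norm h))"
    proof -
      have "norm (?X n (?X n h)) \<le> \<rho> * norm (?X n h)" by (rule Suc)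
      also have "\<dots> \<le> \<rho> * (\<rho> * norm h)" using Suc \<rho>0 by (simp add: mult_left_mono)
      finally show ?thesis using nQ[of h] by simp
    qed
    also have "\<dots> = ((r + \<rho>\<^sup>2) / 2) * norm h" by (simp add: power2_eq_square algebra_simps)
    also have "\<dots> = \<rho> * norm h" using \<rho>eq by simp
    finally show ?case .
  qed
  have sadj: "cinner (?X n x) y = cinner x (?X n y)" for n x y
  proof (induction n arbitrary: x y)
    case 0 then show ?case by simp
  next
    case (Suc n)
    show ?case using Suc by (simp add: cinner_scaleR_left cinner_scaleR_right cinner_add_left cinner_add_right sa)
  qed
  have comm: "C (?X n h) = ?X n (C h)" if C: "bounded_op C" "\<And>h. C (Q h) = Q (C h)" for C n h
  proof (induction n arbitrary: h)
    case 0 then show ?case using C by (simp add: bounded_op_def clinear_zero)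
  next
    case (Suc n)
    have cl: "clinear C" using C by (simp add: bounded_op_def)
    show ?case using Suc C by (simp add: clinear_scaleR[OF cl] clinear_add[OF cl])
  qed
  have diffb: "norm (?X (Suc n) h - ?X n h) \<le> \<rho> ^ n * norm h" for n h
  proof (induction n arbitrary: h)
    case 0
    have "norm (?X (Suc 0) h - ?X 0 h) = (1/2) * norm (Q h)" by simp
    also have "\<dots> \<le> (1/2) * (r * norm h)" using nQ[of h] by simp
    also have "\<dots> \<le> norm h"
      using mult_left_le_one_le[of "norm h" r] r1 r0 norm_ge_zero[of h] by linarith
    finally show ?case by simp
  next
    case (Suc n)
    have l1: "clinear (?X (Suc n))" by (rule lin)
    have e: "?X (Suc (Suc n)) h - ?X (Suc n) h
        = scaleR (1/2) (?X (Suc n) (?X (Suc n) h - ?X n h) + (?X (Suc n) (?X n h) - ?X n (?X n h)))"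
    proof -
      have "?X (Suc (Suc n)) h - ?X (Suc n) h = scaleR (1/2) (?X (Suc n) (?X (Suc n) h) - ?X n (?X n h))"
        by (simp only: sqit.simps scaleR_diff_right[symmetric]) (simp add: algebra_simps)
      also have "\<dots> = scaleR (1/2) (?X (Suc n) (?X (Suc n) h - ?X n h) + (?X (Suc n) (?X n h) - ?X n (?X n h)))"
        unfolding clinear_diff[OF l1] by (simp del: sqit.simps add: algebra_simps)
      finally show ?thesis .
    qed
    have "norm (?X (Suc (Suc n)) h - ?X (Suc n) h)
        \<le> (1/2) * (norm (?X (Suc n) (?X (Suc n) h - ?X n h)) + norm (?X (Suc n) (?X n h) - ?X n (?X n h)))"
      unfolding e by (simp del: sqit.simps add: norm_triangle_ineq)
    also have "\<dots> \<le> (1/2) * (\<rho> * (\<rho> ^ n * norm h) + \<rho> ^ n * (\<rho> * norm h))"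
    proof -
      have "norm (?X (Suc n) (?X (Suc n) h - ?X n h)) \<le> \<rho> * norm (?X (Suc n) h - ?X n h)" by (rule nb)
      also have "\<dots> \<le> \<rho> * (\<rho> ^ n * norm h)" using Suc \<rho>0 by (simp add: mult_left_mono)
      finally have a: "norm (?X (Suc n) (?X (Suc n) h - ?X n h)) \<le> \<rho> * (\<rho> ^ n * norm h)" .
      have "norm (?X (Suc n) (?X n h) - ?X n (?X n h)) \<le> \<rho> ^ n * norm (?X n h)" by (rule Suc)
      also have "\<dots> \<le> \<rho> ^ n * (\<rho> * norm h)" using nb \<rho>0 by (simp add: mult_left_mono)
      finally have b: "norm (?X (Suc n) (?X n h) - ?X n (?X n h)) \<le> \<rho> ^ n * (\<rho> * norm h)" .
      show ?thesis by (rule mult_left_mono[OF add_mono[OF a b]]) simp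
    qed
    also have "\<dots> = \<rho> ^ Suc n * norm h" by (simp add: algebra_simps)
    finally show ?case .
  qed
  have summ: "summable (\<lambda>n. ?X (Suc n) h - ?X n h)" for h
  proof (rule summable_norm_cancel)
    show "summable (\<lambda>n. norm (?X (Suc n) h - ?X n h))"
    proof (rule summable_comparison_test[where g="\<lambda>n. \<rho> ^ n * norm h"])
      show "\<exists>N. \<forall>n\<ge>N. norm (norm (?X (Suc n) h - ?X n h)) \<le> \<rho> ^ n * norm h"
        using diffb by auto
      show "summable (\<lambda>n. \<rho> ^ n * norm h)"
        using \<rho>0 \<rho>1 by (intro summable_mult2 summable_geometric) simp
    qed
  qed
  define Xl where "Xl h = (\<Sum>n. ?X (Suc n) h - ?X n h)" for h
  have conv: "(\<lambda>n. ?X n h) \<longlonglongrightarrow> Xl h" for h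
  proof -
    have "(\<lambda>n. \<Sum>i<n. ?X (Suc i) h - ?X i h) \<longlonglongrightarrow> Xl h"
      unfolding Xl_def by (rule summable_LIMSEQ[OF summ])
    moreover have "(\<Sum>i<n. ?X (Suc i) h - ?X i h) = ?X n h" for n
      using sum_lessThan_telescope[of "\<lambda>i. sqit Q i h" n] by (simp del: sqit.simps add: sqit.simps(1))
    ultimately show ?thesis by simp
  qed
  have Xl_add: "Xl (x + y) = Xl x + Xl y" for x y
  proof -
    have "(\<lambda>n. ?X n (x + y)) \<longlonglongrightarrow> Xl x + Xl y"
      using tendsto_add[OF conv[of x] conv[of y]] by (simp add: clinear_add[OF lin])
    then show ?thesis using conv[of "x + y"] LIMSEQ_unique by blast
  qed
  have Xl_scaleC: "Xl (scaleC a x) = scaleC a (Xl x)" for a x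
  proof -
    have "(\<lambda>n. scaleC a (?X n x)) \<longlonglongrightarrow> scaleC a (Xl x)"
      by (rule bounded_linear.tendsto[OF bl_scaleC conv])
    then have "(\<lambda>n. ?X n (scaleC a x)) \<longlonglongrightarrow> scaleC a (Xl x)"
      by (simp add: clinear_scaleC[OF lin])
    then show ?thesis using conv[of "scaleC a x"] LIMSEQ_unique by blast
  qed
  have Xl_lin: "clinear Xl" by (simp add: clinear_def Xl_add Xl_scaleC)
  have Xl_nb: "norm (Xl h) \<le> \<rho> * norm h" for h
  proof (rule LIMSEQ_le_const2)
    show "(\<lambda>n. norm (?X n h)) \<longlonglongrightarrow> norm (Xl h)" by (intro tendsto_intros conv)
    show "\<exists>N. \<forall>n\<ge>N. norm (?X n h) \<le> \<rho> * norm h" using nb by blast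
  qed
  have Xl_sa: "cinner (Xl x) y = cinner x (Xl y)" for x y
  proof -
    have "(\<lambda>n. cinner (?X n x) y) \<longlonglongrightarrow> cinner (Xl x) y"
      by (rule bounded_linear.tendsto[OF bl_cinner_left conv])
    moreover have "(\<lambda>n. cinner x (?X n y)) \<longlonglongrightarrow> cinner x (Xl y)"
      by (rule bounded_linear.tendsto[OF bl_cinner_right conv])
    ultimately show ?thesis using sadj LIMSEQ_unique by simp
  qed
  have Xl_comm: "C (Xl h) = Xl (C h)" if C: "bounded_op C" "\<And>h. C (Q h) = Q (C h)" for C h
  proof -
    have "(\<lambda>n. C (?X n h)) \<longlonglongrightarrow> C (Xl h)"
      by (rule bounded_linear.tendsto[OF bounded_op_bl[OF C(1)] conv])
    then have "(\<lambda>n. ?X n (C h)) \<longlonglongrightarrow> C (Xl h)" using comm[OF C] by simp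
    then show ?thesis using conv[of "C h"] LIMSEQ_unique by blast
  qed
  have Xl_fix: "Xl h = scaleR (1/2) (Q h + Xl (Xl h))" for h
  proof -
    have t1: "(\<lambda>n. ?X (Suc n) h) \<longlonglongrightarrow> Xl h" using conv[of h] by (rule LIMSEQ_Suc)
    have "(\<lambda>n. ?X n (?X n h - Xl h)) \<longlonglongrightarrow> 0"
    proof (rule Lim_null_comparison)
      show "\<forall>\<^sub>F n in sequentially. norm (?X n (?X n h - Xl h)) \<le> \<rho> * norm (?X n h - Xl h)"
        using nb by simp
      have z0: "(\<lambda>n. ?X n h - Xl h) \<longlonglongrightarrow> 0" using conv[of h] by (simp add: LIM_zero)
      show "(\<lambda>n. \<rho> * norm (?X n h - Xl h)) \<longlonglongrightarrow> 0"
        using tendsto_mult_left_zero[OF tendsto_norm_zero[OF z0], of \<rho>] by (simp add: mult.commute)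
    qed
    then have "(\<lambda>n. ?X n (?X n h - Xl h) + ?X n (Xl h)) \<longlonglongrightarrow> 0 + Xl (Xl h)"
      using conv[of "Xl h"] by (rule tendsto_add)
    then have "(\<lambda>n. ?X n (?X n h)) \<longlonglongrightarrow> Xl (Xl h)"
      by (simp add: clinear_diff[OF lin])
    then have "(\<lambda>n. scaleR (1/2) (Q h + ?X n (?X n h))) \<longlonglongrightarrow> scaleR (1/2) (Q h + Xl (Xl h))"
      by (intro tendsto_intros)
    then have "(\<lambda>n. ?X (Suc n) h) \<longlonglongrightarrow> scaleR (1/2) (Q h + Xl (Xl h))" by simp
    then show ?thesis using t1 LIMSEQ_unique by blast
  qed
  define R where "R h = h - Xl h" for h
  have "bounded_op R"
    unfolding bounded_op_def
  proof
    show "clinear R" unfolding clinear_def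
      by (intro allI conjI) (simp_all add: R_def Xl_add Xl_scaleC scaleC_diff_right)
    show "\<exists>K. \<forall>x. norm (R x) \<le> K * norm x"
    proof (intro exI allI)
      fix x
      have "norm (R x) \<le> norm x + norm (Xl x)" unfolding R_def by (rule norm_triangle_ineq4)
      also have "\<dots> \<le> (1 + \<rho>) * norm x" using Xl_nb[of x] by (simp add: algebra_simps)
      finally show "norm (R x) \<le> (1 + \<rho>) * norm x" .
    qed
  qed
  moreover have "\<forall>x y. cinner (R x) y = cinner x (R y)"
    by (simp add: R_def cinner_diff_left cinner_diff_right Xl_sa)
  moreover have "\<forall>h. R (R h) = h - Q h"
  proof
    fix h
    have "R (R h) = h - Xl h - Xl h + Xl (Xl h)"
      by (simp add: R_def clinear_diff[OF Xl_lin])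
    also have "\<dots> = h - Q h"
    proof -
      have "scaleR 2 (Xl h) = Q h + Xl (Xl h)" using arg_cong[OF Xl_fix[of h], of "scaleR 2"] by simp
      then show ?thesis by (simp add: scaleR_2 algebra_simps)
    qed
    finally show "R (R h) = h - Q h" .
  qed
  moreover have "\<forall>C. bounded_op C \<longrightarrow> (\<forall>h. C (Q h) = Q (C h)) \<longrightarrow> (\<forall>h. C (R h) = R (C h))"
  proof (intro allI impI)
    fix C h assume C: "bounded_op C" "\<forall>h. C (Q h) = Q (C h)"
    have cl: "clinear C" using C by (simp add: bounded_op_def)
    show "C (R h) = R (C h)" using Xl_comm[of C h] C by (simp add: R_def clinear_diff[OF cl])
  qed
  ultimately show ?thesis by blast
qed

lemma cstar_one[simp]: "cstar (1::'a::cstar_algebra) = 1"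
proof -
  have "cstar (cstar 1 * (1::'a)) = cstar 1 * cstar (cstar 1)" by (rule cstar_mult)
  then have "cstar (cstar (1::'a)) = cstar 1" by (simp add: cstar_cstar)
  then show ?thesis by (simp add: cstar_cstar)
qed

lemma cstar_zero[simp]: "cstar (0::'a::cstar_algebra) = 0"
proof -
  have "cstar (0 + (0::'a)) = cstar 0 + cstar 0" by (rule cstar_add)
  then show ?thesis by simp
qed

lemma cp_bounded: "cp_map \<phi> \<Longrightarrow> bounded_op (\<phi> a)"
  by (simp add: cp_map_def)

lemma cp_all:
  fixes n :: nat and B :: "nat \<Rightarrow> nat \<Rightarrow> 'a::cstar_algebra" and h :: "nat \<Rightarrow> 'h::chilbert"
  assumes "cp_map (\<phi>::'a \<Rightarrow> 'h \<Rightarrow> 'h)"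
  shows "let s = (\<Sum>i<n. \<Sum>j<n. cinner (h i) (\<phi> (\<Sum>k<n. cstar (B k i) * B k j) (h j))) in s \<in> \<real> \<and> 0 \<le> Re s"
  using assms unfolding cp_map_def by blast

lemma cp_1x1:
  assumes "cp_map (\<phi>::'a::cstar_algebra \<Rightarrow> 'h::chilbert \<Rightarrow> 'h)"
  shows "0 \<le> Re (cinner h (\<phi> 1 h))"
  using cp_all[OF assms, where n=1 and h="\<lambda>_. h" and B="\<lambda>_ _. 1"] by (simp add: Let_def)

lemma cp_2x2:
  assumes "cp_map (\<phi>::'a::cstar_algebra \<Rightarrow> 'h::chilbert \<Rightarrow> 'h)"
  shows "Im (cinner h1 (\<phi> 1 h1) + cinner h1 (\<phi> x h2) + cinner h2 (\<phi> (cstar x) h1) + cinner h2 (\<phi> (cstar x * x) h2)) = 0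
       \<and> 0 \<le> Re (cinner h1 (\<phi> 1 h1) + cinner h1 (\<phi> x h2) + cinner h2 (\<phi> (cstar x) h1) + cinner h2 (\<phi> (cstar x * x) h2))"
proof -
  define B where "B = (\<lambda>(k::nat) (j::nat). if k = 0 then (if j = 0 then 1 else x) else (0::'a))"
  define h where "h = (\<lambda>i::nat. if i = 0 then h1 else h2)"
  have "let s = (\<Sum>i<2. \<Sum>j<2. cinner (h i) (\<phi> (\<Sum>k<2. cstar (B k i) * B k j) (h j)))
        in s \<in> \<real> \<and> 0 \<le> Re s"
    by (rule cp_all[OF assms])
  moreover have "(\<Sum>i<2. \<Sum>j<2. cinner (h i) (\<phi> (\<Sum>k<2. cstar (B k i) * B k j) (h j)))
     = cinner h1 (\<phi> 1 h1) + cinner h1 (\<phi> x h2) + cinner h2 (\<phi> (cstar x) h1) + cinner h2 (\<phi> (cstar x * x) h2)"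
    by (simp add: numeral_2_eq_2 B_def h_def)
  ultimately show ?thesis by (simp add: Let_def complex_is_Real_iff)
qed

lemma cp_star:
  assumes cp: "cp_map (\<phi>::'a::cstar_algebra \<Rightarrow> 'h::chilbert \<Rightarrow> 'h)"
  shows "cinner k (\<phi> (cstar x) y) = cinner (\<phi> x k) y"
proof -
  have l1: "clinear (\<phi> x)" using cp_bounded[OF cp] by (simp add: bounded_op_def)
  have l2: "clinear (\<phi> (cstar x))" using cp_bounded[OF cp] by (simp add: bounded_op_def)
  define z where "z = cinner y (\<phi> x k)"
  define w where "w = cinner k (\<phi> (cstar x) y)"
  define a where "a = cinner y (\<phi> 1 y)"
  define d where "d = cinner k (\<phi> (cstar x * x) k)"
  have s1: "Im (a + z + w + d) = 0" using cp_2x2[OF cp, of y x k] by (simp add: a_def z_def w_def d_def)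
  have s2: "Im (a - z - w + d) = 0"
    using cp_2x2[OF cp, of y x "-k"]
    by (simp add: a_def z_def w_def d_def clinear_minus[OF l1] clinear_minus cp_bounded cp
        cinner_minus_left cinner_minus_right bounded_op_clinear)
  define ii where "ii = (\<i>::complex)"
  have l3: "clinear (\<phi> (cstar x * x))" using cp_bounded[OF cp] by (simp add: bounded_op_def)
  have l0: "clinear (\<phi> 1)" using cp_bounded[OF cp] by (simp add: bounded_op_def)
  have a3: "cinner (scaleC ii y) (\<phi> 1 (scaleC ii y)) = a"
    by (simp add: a_def clinear_scaleC[OF l0] cinner_scaleC_left cinner_scaleC_right ii_def)
  have s3: "Im (a + (- ii) * z + ii * w + d) = 0"
    using cp_2x2[OF cp, of "scaleC ii y" x k]
    by (simp add: a_def clinear_scaleC[OF l0] z_def w_def d_def clinear_scaleC[OF l2] cinner_scaleC_left cinner_scaleC_right ii_def)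
  have s4: "Im (a - (- ii) * z - ii * w + d) = 0"
    using cp_2x2[OF cp, of "scaleC ii y" x "-k"]
    by (simp add: a_def clinear_scaleC[OF l0] z_def w_def d_def clinear_scaleC[OF l2] clinear_minus[OF l1] clinear_minus[OF l3] cinner_scaleC_left cinner_scaleC_right
        cinner_minus_left cinner_minus_right ii_def)
  have "Im z + Im w = 0" using s1 s2 by simp
  moreover have "Re w - Re z = 0" using s3 s4 by (simp add: ii_def)
  ultimately have "w = cnj z" by (simp add: complex_eq_iff)
  then show ?thesis by (simp add: w_def z_def cinner_cnj)
qed

lemma cp_star':
  assumes cp: "cp_map (\<phi>::'a::cstar_algebra \<Rightarrow> 'h::chilbert \<Rightarrow> 'h)"
  shows "cinner k (\<phi> x y) = cinner (\<phi> (cstar x) k) y"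
  using cp_star[OF cp, of k "cstar x" y] by (simp add: cstar_cstar)

lemma cp_KS:
  assumes cp: "cp_map (\<phi>::'a::cstar_algebra \<Rightarrow> 'h::chilbert \<Rightarrow> 'h)"
    and one: "\<And>y. Re (cinner y (\<phi> 1 y)) \<le> (norm y)\<^sup>2"
  shows "(norm (\<phi> x k))\<^sup>2 \<le> Re (cinner k (\<phi> (cstar x * x) k))"
proof -
  define y where "y = \<phi> x k"
  have l1: "clinear (\<phi> 1)" using cp_bounded[OF cp] by (simp add: bounded_op_def)
  have l2: "clinear (\<phi> (cstar x))" using cp_bounded[OF cp] by (simp add: bounded_op_def)
  have "0 \<le> Re (cinner (-y) (\<phi> 1 (-y)) + cinner (-y) (\<phi> x k) + cinner k (\<phi> (cstar x) (-y)) + cinner k (\<phi> (cstar x * x) k))"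
    using cp_2x2[OF cp, of "-y" x k] by blast
  moreover have "cinner (-y) (\<phi> 1 (-y)) = cinner y (\<phi> 1 y)"
    by (simp add: clinear_minus[OF l1] cinner_minus_left cinner_minus_right)
  moreover have "cinner (-y) (\<phi> x k) = - complex_of_real ((norm y)\<^sup>2)"
    by (simp add: cinner_minus_left y_def cinner_self)
  moreover have "cinner k (\<phi> (cstar x) (-y)) = - complex_of_real ((norm y)\<^sup>2)"
    by (simp add: clinear_minus[OF l2] cinner_minus_right cp_star[OF cp] y_def cinner_self)
  ultimately have "0 \<le> Re (cinner y (\<phi> 1 y)) - 2 * (norm y)\<^sup>2 + Re (cinner k (\<phi> (cstar x * x) k))"
    by simp
  then show ?thesis using one[of y] by (simp add: y_def)
qed

lemma cca_empty:
  assumes "complex_countably_additive M \<mu>"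
  shows "\<mu> {} = 0"
proof -
  have "(\<lambda>n. \<mu> ((\<lambda>_. {}) n)) sums \<mu> (\<Union>n. (\<lambda>_::nat. {}) n)"
    using assms unfolding complex_countably_additive_def by (auto simp: disjoint_family_on_def)
  then have "summable (\<lambda>n::nat. \<mu> {})" by (simp add: sums_summable)
  then show ?thesis by (simp add: summable_const_iff)
qed

lemma cca_add:
  assumes c: "complex_countably_additive M \<mu>" and A: "A \<in> sets M" and B: "B \<in> sets M" and d: "A \<inter> B = {}"
  shows "\<mu> (A \<union> B) = \<mu> A + \<mu> B"
proof -
  define F where "F = (\<lambda>n::nat. if n = 0 then A else if n = 1 then B else {})"
  have r: "range F \<subseteq> sets M" using A B by (auto simp: F_def)
  have df: "disjoint_family F" using d by (auto simp: disjoint_family_on_def F_def)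
  have U: "(\<Union>n. F n) = A \<union> B" by (auto simp: F_def split: if_splits)
  have "(\<lambda>n. \<mu> (F n)) sums \<mu> (A \<union> B)"
    using c r df U unfolding complex_countably_additive_def by metis
  moreover have "(\<lambda>n. \<mu> (F n)) sums (\<Sum>n\<in>{0,1}. \<mu> (F n))"
    by (rule sums_finite) (auto simp: F_def cca_empty[OF c])
  ultimately have "\<mu> (A \<union> B) = (\<Sum>n\<in>{0,1}. \<mu> (F n))" by (rule sums_unique2)
  then show ?thesis by (simp add: F_def)
qed

lemma bounded_op_comp:
  assumes "bounded_op (f::'h::chilbert \<Rightarrow> 'h)" "bounded_op g"
  shows "bounded_op (\<lambda>h. f (g h))"
proof -
  obtain K where K: "K \<ge> 0" "\<And>x. norm (f x) \<le> K * norm x" using bounded_op_bound[OF assms(1)] by blast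
  obtain L where L: "L \<ge> 0" "\<And>x. norm (g x) \<le> L * norm x" using bounded_op_bound[OF assms(2)] by blast
  have cf: "clinear f" and cg: "clinear g" using assms by (auto simp: bounded_op_def)
  have "clinear (\<lambda>h. f (g h))" using cf cg by (simp add: clinear_def)
  moreover have "norm (f (g x)) \<le> (K * L) * norm x" for x
  proof -
    have "norm (f (g x)) \<le> K * norm (g x)" by (rule K(2))
    also have "\<dots> \<le> K * (L * norm x)" using K(1) L(2) by (simp add: mult_left_mono)
    finally show ?thesis by (simp add: mult.assoc)
  qed
  ultimately show ?thesis by (auto simp: bounded_op_def)
qed

lemma bounded_op_id: "bounded_op (\<lambda>h::'h::chilbert. h)"
  unfolding bounded_op_def clinear_def by (auto intro: exI[of _ 1])

lemma bounded_op_diff_scale: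
  assumes "bounded_op (f::'h::chilbert \<Rightarrow> 'h)" "bounded_op g"
  shows "bounded_op (\<lambda>h. f h - scaleR r (g h))"
proof -
  obtain K where K: "K \<ge> 0" "\<And>x. norm (f x) \<le> K * norm x" using bounded_op_bound[OF assms(1)] by blast
  obtain L where L: "L \<ge> 0" "\<And>x. norm (g x) \<le> L * norm x" using bounded_op_bound[OF assms(2)] by blast
  have cf: "clinear f" and cg: "clinear g" using assms by (auto simp: bounded_op_def)
  have "clinear (\<lambda>h. f h - scaleR r (g h))"
    unfolding clinear_def
    by (intro allI conjI)
       (simp_all add: clinear_add[OF cf] clinear_add[OF cg] clinear_scaleC[OF cf] clinear_scaleC[OF cg]
          scaleR_scaleC_h scaleC_scaleC scaleC_diff_right scaleC_add_right mult.commute algebra_simps)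
  moreover have "norm (f x - scaleR r (g x)) \<le> (K + \<bar>r\<bar> * L) * norm x" for x
  proof -
    have "norm (f x - scaleR r (g x)) \<le> norm (f x) + \<bar>r\<bar> * norm (g x)"
      using norm_triangle_ineq4[of "f x" "scaleR r (g x)"] by simp
    also have "\<dots> \<le> K * norm x + \<bar>r\<bar> * (L * norm x)"
      using K(2)[of x] L(2)[of x] by (simp add: add_mono mult_left_mono)
    finally show ?thesis by (simp add: algebra_simps)
  qed
  ultimately show ?thesis by (auto simp: bounded_op_def)
qed

lemma bounded_op_scaleR:
  assumes "bounded_op (f::'h::chilbert \<Rightarrow> 'h)"
  shows "bounded_op (\<lambda>h. scaleR r (f h))"
  using bounded_op_diff_scale[OF bounded_op_diff_scale[OF assms assms, of 1] assms, of "-r"]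
  by simp

lemma polar_step:
  fixes I :: "'x set \<Rightarrow> 'a::cstar_algebra \<Rightarrow> 'h::chilbert \<Rightarrow> 'h"
    and Is :: "'x set \<Rightarrow> 'a \<Rightarrow> 'h \<Rightarrow> 'h"
  assumes bI: "\<And>A a. A \<in> sets M \<Longrightarrow> bounded_op (I A a)"
    and sI: "\<And>A a. A \<in> sets M \<Longrightarrow> I A (cstar a) = adjoint (I A a)"
    and bT: "bounded_op T" and bTi: "bounded_op Ti"
    and lT: "\<And>h. Ti (T h) = h" and rT: "\<And>h. T (Ti h) = h"
    and cpIs: "\<And>A. A \<in> sets M \<Longrightarrow> cp_map (Is A)"
    and inter: "\<And>A a h. A \<in> sets M \<Longrightarrow> Is A a (T h) = T (I A a h)"
  shows "\<exists>U. unitary_op U \<and> (\<forall>A\<in>sets M. \<forall>a. Is A a = (\<lambda>h. adjoint U (I A a (U h))))"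
proof -
  define P where "P h = adjoint T (T h)" for h
  have bTs: "bounded_op (adjoint T)" by (rule adjoint_bounded[OF bT])
  have bTis: "bounded_op (adjoint Ti)" by (rule adjoint_bounded[OF bTi])
  have bP: "bounded_op P" unfolding P_def by (rule bounded_op_comp[OF bTs bT])
  have clP: "clinear P" using bP by (simp add: bounded_op_def)
  have Psa: "cinner (P x) y = cinner x (P y)" for x y
    by (simp add: P_def adjoint_prop[OF bT] adjoint_prop2[OF bT])
  have PT: "cinner x (P x) = cinner (T x) (T x)" for x
    by (simp add: P_def adjoint_prop2[OF bT])
  have ai: "adjoint Ti (adjoint T z) = z" for z
    by (rule cinner_eq_ext) (simp add: adjoint_prop2[OF bTi] adjoint_prop2[OF bT] rT)
  have ia: "adjoint T (adjoint Ti z) = z" for z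
    by (rule cinner_eq_ext) (simp add: adjoint_prop2[OF bTi] adjoint_prop2[OF bT] lT)
  have Pcomm: "P (I A a z) = I A a (P z)" if A: "A \<in> sets M" for A a z
  proof (rule cinner_eq_ext)
    fix u
    have "cinner u (P (I A a z)) = cinner (T u) (T (I A a z))"
      by (simp add: P_def adjoint_prop2[OF bT])
    also have "\<dots> = cinner (T u) (Is A a (T z))" by (simp add: inter[OF A])
    also have "\<dots> = cinner (Is A (cstar a) (T u)) (T z)" by (rule cp_star'[OF cpIs[OF A]])
    also have "\<dots> = cinner (T (I A (cstar a) u)) (T z)" by (simp add: inter[OF A])
    also have "\<dots> = cinner (I A (cstar a) u) (P z)" by (simp add: P_def adjoint_prop2[OF bT])
    also have "\<dots> = cinner (adjoint (I A a) u) (P z)" by (simp add: sI[OF A])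
    also have "\<dots> = cinner u (I A a (P z))" by (simp add: adjoint_prop[OF bI[OF A]])
    finally show "cinner u (P (I A a z)) = cinner u (I A a (P z))" .
  qed
  obtain K where K: "K \<ge> 0" "\<And>x. norm (adjoint T x) \<le> K * norm x" using bounded_op_bound[OF bTs] by blast
  obtain L where L: "L \<ge> 0" "\<And>x. norm (Ti x) \<le> L * norm x" using bounded_op_bound[OF bTi] by blast
  define K' where "K' = K + 1"
  define L' where "L' = L + 1"
  have K'1: "K' \<ge> 1" and L'1: "L' \<ge> 1" using K L by (auto simp: K'_def L'_def)
  have K'b: "norm (adjoint T x) \<le> K' * norm x" for x
    using K(2)[of x] by (simp add: K'_def algebra_simps add_increasing)
  have L'b: "norm (Ti x) \<le> L' * norm x" for x
    using L(2)[of x] by (simp add: L'_def algebra_simps add_increasing)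
  define c where "c = K'\<^sup>2"
  have cpos: "c > 0" using K'1 by (simp add: c_def)
  define Q where "Q h = h - scaleR (1/c) (P h)" for h
  have bQ: "bounded_op Q" unfolding Q_def by (rule bounded_op_diff_scale[OF bounded_op_id bP])
  have Qsa: "cinner (Q x) y = cinner x (Q y)" for x y
    by (simp add: Q_def cinner_diff_left cinner_diff_right cinner_scaleR_left cinner_scaleR_right Psa)
  define r0 where "r0 = sqrt (1 - 1 / (K' * L')\<^sup>2)"
  have "1 \<le> K' * L'" using mult_mono[of 1 K' 1 L'] K'1 L'1 by simp
  then have KL1: "(K' * L')\<^sup>2 \<ge> 1" by (simp add: one_le_power)
  have "1 / (K' * L')\<^sup>2 \<le> 1" using KL1 by (simp add: divide_le_eq)
  then have r00: "0 \<le> r0" unfolding r0_def by simp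
  have r01: "r0 < 1" unfolding r0_def using KL1 K'1 L'1 by simp
  have nQ: "norm (Q h) \<le> r0 * norm h" for h
  proof -
    define t where "t = (norm (T h))\<^sup>2"
    define n where "n = (norm h)\<^sup>2"
    define p where "p = (norm (P h))\<^sup>2"
    have e1: "(norm (Q h))\<^sup>2 = n - 2 * (t / c) + p / c\<^sup>2"
    proof -
      have "Re (cinner h (scaleR (1/c) (P h))) = t / c"
        by (simp add: cinner_scaleR_right PT cinner_self t_def)
      moreover have "(norm (scaleR (1/c) (P h)))\<^sup>2 = p / c\<^sup>2"
        using cpos by (simp add: p_def power_divide)
      ultimately show ?thesis by (simp add: Q_def norm_diff_sq n_def)
    qed
    have pt: "p \<le> c * t"
    proof -
      have "norm (P h) \<le> K' * norm (T h)" unfolding P_def by (rule K'b)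
      then have "(norm (P h))\<^sup>2 \<le> (K' * norm (T h))\<^sup>2"
        by (rule power_mono) simp
      then show ?thesis by (simp add: p_def c_def t_def power_mult_distrib)
    qed
    have nt: "n \<le> L'\<^sup>2 * t"
    proof -
      have "norm h \<le> L' * norm (T h)" using L'b[of "T h"] by (simp add: lT)
      then have "(norm h)\<^sup>2 \<le> (L' * norm (T h))\<^sup>2"
        by (rule power_mono) simp
      then show ?thesis by (simp add: n_def t_def power_mult_distrib)
    qed
    have "p / c\<^sup>2 \<le> t / c"
      using pt cpos by (simp add: power2_eq_square field_simps)
    then have "(norm (Q h))\<^sup>2 \<le> n - t / c" using e1 by simp
    also have "\<dots> \<le> n - n / (c * L'\<^sup>2)"
    proof -
      have "n / (c * L'\<^sup>2) \<le> t / c"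
        using nt cpos L'1 by (simp add: field_simps)
      then show ?thesis by simp
    qed
    also have "\<dots> = (r0 * norm h)\<^sup>2"
      using KL1 by (simp add: r0_def power_mult_distrib n_def c_def field_simps)
    finally have X: "(norm (Q h))\<^sup>2 \<le> (r0 * norm h)\<^sup>2" .
    show ?thesis by (rule power2_le_imp_le[OF X]) (simp add: r00)
  qed
  obtain R where bR: "bounded_op R" and Rsa: "\<forall>x y. cinner (R x) y = cinner x (R y)"
    and RR: "\<forall>h. R (R h) = h - Q h"
    and Rcomm: "\<forall>C. bounded_op C \<longrightarrow> (\<forall>h. C (Q h) = Q (C h)) \<longrightarrow> (\<forall>h. C (R h) = R (C h))"
    using op_sqrt[OF bQ Qsa r00 r01 nQ] by blast
  have clR: "clinear R" using bR by (simp add: bounded_op_def)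
  define S where "S h = scaleR (sqrt c) (R h)" for h
  have bS: "bounded_op S" unfolding S_def by (rule bounded_op_scaleR[OF bR])
  have clS: "clinear S" using bS by (simp add: bounded_op_def)
  have Ssa: "cinner (S x) y = cinner x (S y)" for x y
    by (simp add: S_def cinner_scaleR_left cinner_scaleR_right Rsa)
  have SS: "S (S h) = P h" for h
  proof -
    have "S (S h) = scaleR c (R (R h))"
      using cpos by (simp add: S_def clinear_scaleR[OF clR])
    also have "\<dots> = P h" using cpos by (simp add: RR Q_def)
    finally show ?thesis .
  qed
  have Scomm: "I A a (S h) = S (I A a h)" if A: "A \<in> sets M" for A a h
  proof -
    have clC: "clinear (I A a)" using bI[OF A] by (simp add: bounded_op_def)
    have "\<forall>h. I A a (Q h) = Q (I A a h)"
      by (simp add: Q_def clinear_diff[OF clC] clinear_scaleR[OF clC] Pcomm[OF A])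
    then have "I A a (R h) = R (I A a h)" using Rcomm bI[OF A] by blast
    then show ?thesis by (simp add: S_def clinear_scaleR[OF clC])
  qed
  define U where "U h = S (Ti h)" for h
  have bU: "bounded_op U" unfolding U_def by (rule bounded_op_comp[OF bS bTi])
  have adjU: "adjoint U = (\<lambda>h. adjoint Ti (S h))"
    by (rule adjoint_unique) (simp add: U_def adjoint_prop[OF bTi] Ssa)
  define Mi where "Mi h = Ti (adjoint Ti h)" for h
  have PM: "P (Mi h) = h" for h by (simp add: P_def Mi_def rT ia)
  have MP: "Mi (P h) = h" for h by (simp add: P_def Mi_def ai lT)
  have PS: "P (S z) = S (P z)" for z by (simp add: SS[symmetric])
  have SM: "S (Mi h) = Mi (S h)" for h
  proof -
    have "S (Mi h) = Mi (P (S (Mi h)))" by (simp add: MP)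
    also have "\<dots> = Mi (S (P (Mi h)))" by (simp add: PS)
    also have "\<dots> = Mi (S h)" by (simp add: PM)
    finally show ?thesis .
  qed
  have "unitary_op U"
    unfolding unitary_op_def
  proof (intro conjI)
    show "bounded_op U" by (rule bU)
    show "adjoint U \<circ> U = id"
    proof
      fix h
      have "adjoint Ti (S (S (Ti h))) = h" by (simp add: SS P_def rT ai)
      then show "(adjoint U \<circ> U) h = id h" by (simp add: adjU U_def)
    qed
    show "U \<circ> adjoint U = id"
    proof
      fix h
      have "S (Mi (S h)) = h" by (simp add: SM SS MP)
      then show "(U \<circ> adjoint U) h = id h" by (simp add: adjU U_def Mi_def)
    qed
  qed
  moreover have "\<forall>A\<in>sets M. \<forall>a. Is A a = (\<lambda>h. adjoint U (I A a (U h)))"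
  proof (intro ballI allI ext)
    fix A a h assume A: "A \<in> sets M"
    have "adjoint U (I A a (U h)) = adjoint Ti (S (I A a (S (Ti h))))" by (simp add: adjU U_def)
    also have "\<dots> = adjoint Ti (P (I A a (Ti h)))" by (simp add: Scomm[OF A] SS)
    also have "\<dots> = T (I A a (Ti h))" by (simp add: P_def ai)
    also have "\<dots> = Is A a h" using inter[OF A, of a "Ti h"] by (simp add: rT)
    finally show "Is A a h = adjoint U (I A a (U h))" by simp
  qed
  ultimately show ?thesis by blast
qed

theorem corollary3p9:
  fixes M :: "'x measure"
    and I :: "'x set \<Rightarrow> 'a::cstar_algebra \<Rightarrow> 'h::chilbert \<Rightarrow> 'h"
  assumes "spectral_instrument M I"
  shows "cstar_extreme M I"
proof -
  have ucp: "ucp_instrument M I" using assms by (simp add: spectral_instrument_def)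
  have cpI: "\<And>A. A \<in> sets M \<Longrightarrow> cp_map (I A)"
    using ucp by (simp add: ucp_instrument_def cp_instrument_def)
  have bI: "\<And>A a. A \<in> sets M \<Longrightarrow> bounded_op (I A a)" using cpI cp_bounded by blast
  have sI: "\<And>A a. A \<in> sets M \<Longrightarrow> I A (cstar a) = adjoint (I A a)"
    using assms by (simp add: spectral_instrument_def)
  have mI: "\<And>A a b h. A \<in> sets M \<Longrightarrow> I A (a * b) h = I A a (I A b h)"
    using assms by (simp add: spectral_instrument_def)
  show ?thesis unfolding cstar_extreme_def
  proof (intro allI impI)
    fix n :: nat and Is :: "nat \<Rightarrow> 'x set \<Rightarrow> 'a \<Rightarrow> 'h \<Rightarrow> 'h" and T :: "nat \<Rightarrow> 'h \<Rightarrow> 'h"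
    assume H: "(\<forall>i<n. ucp_instrument M (Is i) \<and> invertible_op (T i)) \<and>
        (\<lambda>h. \<Sum>i<n. adjoint (T i) (T i h)) = id \<and>
        (\<forall>A\<in>sets M. \<forall>a. I A a = (\<lambda>h. \<Sum>i<n. adjoint (T i) (Is i A a (T i h))))"
    have H1: "\<And>i. i < n \<Longrightarrow> ucp_instrument M (Is i) \<and> invertible_op (T i)" using H by blast
    have H2: "\<And>h. (\<Sum>i<n. adjoint (T i) (T i h)) = h"
    proof -
      fix h
      have "(\<lambda>h. \<Sum>i<n. adjoint (T i) (T i h)) = id" using H by blast
      then show "(\<Sum>i<n. adjoint (T i) (T i h)) = h" by (metis id_apply)
    qed
    have H3: "\<And>A a h. A \<in> sets M \<Longrightarrow> I A a h = (\<Sum>i<n. adjoint (T i) (Is i A a (T i h)))"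
      using H by simp
    have bT: "\<And>i. i < n \<Longrightarrow> bounded_op (T i)" using H1 by (simp add: invertible_op_def)
    have cpIs: "\<And>i A. i < n \<Longrightarrow> A \<in> sets M \<Longrightarrow> cp_map (Is i A)"
      using H1 by (simp add: ucp_instrument_def cp_instrument_def)
    have one: "Re (cinner y (Is i A 1 y)) \<le> (norm y)\<^sup>2" if i: "i < n" and A: "A \<in> sets M" for i A y
    proof -
      define \<mu> where "\<mu> = (\<lambda>B. cinner y (Is i B 1 y))"
      have cca: "complex_countably_additive M \<mu>"
        using H1[OF i] by (simp add: ucp_instrument_def cp_instrument_def \<mu>_def)
      have C: "space M - A \<in> sets M" using A by auto
      have U: "A \<union> (space M - A) = space M" using sets.sets_into_space[OF A] by auto
      have "\<mu> (space M) = \<mu> A + \<mu> (space M - A)"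
        using cca_add[OF cca A C] U by auto
      moreover have "\<mu> (space M) = cinner y y"
        using H1[OF i] by (simp add: ucp_instrument_def \<mu>_def)
      ultimately have e: "\<mu> A + \<mu> (space M - A) = cinner y y" by simp
      have nn: "0 \<le> Re (\<mu> (space M - A))"
        unfolding \<mu>_def by (rule cp_1x1[OF cpIs[OF i C]])
      have "Re (\<mu> A) + Re (\<mu> (space M - A)) = (norm y)\<^sup>2"
        using arg_cong[OF e, of Re] by (simp add: cinner_self_Re)
      then have "Re (\<mu> A) \<le> (norm y)\<^sup>2" using nn by linarith
      then show ?thesis by (simp add: \<mu>_def)
    qed
    have KS: "(norm (Is i A a k))\<^sup>2 \<le> Re (cinner k (Is i A (cstar a * a) k))"
      if i: "i < n" and A: "A \<in> sets M" for i A a k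
      by (rule cp_KS[OF cpIs[OF i A] one[OF i A]])
    have inter: "Is i A a (T i h) = T i (I A a h)" if i: "i < n" and A: "A \<in> sets M" for i A a h
    proof -
      define v where "v = I A a h"
      define w where "w j = Is j A a (T j h)" for j
      have b: "(\<Sum>j<n. Re (cinner (T j h) (Is j A (cstar a * a) (T j h)))) = (norm v)\<^sup>2"
      proof -
        have "cinner h (I A (cstar a * a) h) = (\<Sum>j<n. cinner h (adjoint (T j) (Is j A (cstar a * a) (T j h))))"
          by (simp add: H3[OF A, of "cstar a * a" h] cinner_sum_right)
        also have "\<dots> = (\<Sum>j<n. cinner (T j h) (Is j A (cstar a * a) (T j h)))"
          by (rule sum.cong) (auto simp: adjoint_prop2[OF bT])
        finally have e: "cinner h (I A (cstar a * a) h) = (\<Sum>j<n. cinner (T j h) (Is j A (cstar a * a) (T j h)))" .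
        have "cinner h (I A (cstar a * a) h) = cinner v v"
          by (simp add: mI[OF A] sI[OF A] adjoint_prop2[OF bI[OF A]] v_def)
        then have "(norm v)\<^sup>2 = Re (\<Sum>j<n. cinner (T j h) (Is j A (cstar a * a) (T j h)))"
          using e by (simp add: cinner_self_Re[symmetric])
        then show ?thesis by (simp add: Re_sum)
      qed
      have d: "(\<Sum>j<n. Re (cinner (T j v) (w j))) = (norm v)\<^sup>2"
      proof -
        have vw: "v = (\<Sum>j<n. adjoint (T j) (w j))" unfolding v_def w_def by (rule H3[OF A])
        have "cinner v v = cinner v (\<Sum>j<n. adjoint (T j) (w j))"
          by (subst vw[symmetric]) (rule refl)
        also have "\<dots> = (\<Sum>j<n. cinner (T j v) (w j))"
          unfolding cinner_sum_right by (rule sum.cong) (auto simp: adjoint_prop2[OF bT])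
        finally show ?thesis by (simp add: cinner_self_Re[symmetric] Re_sum)
      qed
      have e: "(\<Sum>j<n. (norm (T j v))\<^sup>2) = (norm v)\<^sup>2"
      proof -
        have "cinner v v = cinner v (\<Sum>j<n. adjoint (T j) (T j v))" by (simp add: H2)
        also have "\<dots> = (\<Sum>j<n. cinner (T j v) (T j v))"
          unfolding cinner_sum_right by (rule sum.cong) (auto simp: adjoint_prop2[OF bT])
        finally show ?thesis by (simp add: cinner_self_Re[symmetric] Re_sum)
      qed
      have ww: "(\<Sum>j<n. (norm (w j))\<^sup>2) \<le> (norm v)\<^sup>2"
      proof -
        have "(\<Sum>j<n. (norm (w j))\<^sup>2) \<le> (\<Sum>j<n. Re (cinner (T j h) (Is j A (cstar a * a) (T j h))))"
          by (rule sum_mono) (simp add: w_def KS[OF _ A])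
        then show ?thesis using b by simp
      qed
      have "(\<Sum>j<n. (norm (T j v - w j))\<^sup>2)
          = (\<Sum>j<n. (norm (T j v))\<^sup>2) - 2 * (\<Sum>j<n. Re (cinner (T j v) (w j))) + (\<Sum>j<n. (norm (w j))\<^sup>2)"
        by (simp add: norm_diff_sq sum.distrib sum_subtractf sum_distrib_left)
      also have "\<dots> \<le> 0" using d e ww by simp
      finally have le0: "(\<Sum>j<n. (norm (T j v - w j))\<^sup>2) \<le> 0" .
      have "(\<Sum>j<n. (norm (T j v - w j))\<^sup>2) = 0"
        using le0 sum_nonneg[of "{..<n}" "\<lambda>j. (norm (T j v - w j))\<^sup>2"] by simp
      then have "\<forall>j\<in>{..<n}. (norm (T j v - w j))\<^sup>2 = 0"
        by (subst sum_nonneg_eq_0_iff[symmetric]) auto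
      then have "(norm (T i v - w i))\<^sup>2 = 0" using i by simp
      then show ?thesis by (simp add: v_def w_def)
    qed
    have "\<exists>U. unitary_op U \<and> (\<forall>A\<in>sets M. \<forall>a. Is i A a = (\<lambda>h. adjoint U (I A a (U h))))"
      if i: "i < n" for i
    proof -
      obtain Ti where Ti: "bounded_op Ti" "Ti \<circ> T i = id" "T i \<circ> Ti = id"
        using H1[OF i] by (auto simp: invertible_op_def)
      have lT: "\<And>h. Ti (T i h) = h" using Ti(2) by (metis comp_apply id_apply)
      have rT: "\<And>h. T i (Ti h) = h" using Ti(3) by (metis comp_apply id_apply)
      show ?thesis
        by (rule polar_step[where M=M and I=I and Is="Is i" and T="T i" and Ti=Ti])
           (simp_all add: bI sI bT[OF i] Ti(1) lT rT cpIs[OF i] inter[OF i])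
    qed
    then have "\<forall>i. \<exists>U. i < n \<longrightarrow> unitary_op U \<and> (\<forall>A\<in>sets M. \<forall>a. Is i A a = (\<lambda>h. adjoint U (I A a (U h))))"
      by blast
    then obtain U where "\<forall>i. i < n \<longrightarrow> unitary_op (U i) \<and> (\<forall>A\<in>sets M. \<forall>a. Is i A a = (\<lambda>h. adjoint (U i) (I A a (U i h))))"
      by (metis choice)
    then show "\<exists>U::nat \<Rightarrow> 'h \<Rightarrow> 'h. \<forall>i<n. unitary_op (U i) \<and>
               (\<forall>A\<in>sets M. \<forall>a. Is i A a = (\<lambda>h. adjoint (U i) (I A a (U i h))))"
      by blast
  qed
qed

end
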